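(* For any $g\ge2$, $n\ge1$ and any $a_1,\dots,a_n\in\mathbb{Z}_{\ge0}$ with $a_1+\cdots+a_n=2g-3+n$, $$P_{g,n+1}(a_1,\dots,a_n,1)=(2n-2)\,P_{g,n}(a_1,\dots,a_n).$$ In particular $P_{g,2}(2g-2,1)=0$, and for $n\ge2$ the vanishing of $P_{g,n}(a_1,\dots,a_n)$ implies the vanishing of $P_{g,n+1}(a_1,\dots,a_n,1)$.
   Context: For $g\ge2$, $m\ge1$, $$P_{g,m}(a_1,\dots,a_m):=\sum_{k=1}^m\frac{(-1)^k(2g-3+k)!}{k!}\sum_{(I_1,\dots,I_k)}\ \sum_{\substack{d_1,\dots,d_k\in\mathbb{Z}_{\ge0}\\ d_1+\cdots+d_k=g-2+m}}\prod_{j=1}^k\binom{2a_{[I_j]}+1}{2d_j}\prod_{i=1}^{|I_j|-1}(2d_j+1-2i),$$ where $(I_1,\dots,I_k)$ runs over ordered $k$-tuples of nonempty pairwise disjoint subsets of $\{1,\dots,m\}$ with union $\{1,\dots,m\}$, $a_{[I]}:=\sum_{\ell\in I}a_\ell$, and $\binom{x}{r}$ is the usual binomial coefficient (zero if $r>x$). *)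

theory Defs
  imports Main "HOL.Binomial" "HOL.Real"
begin

definition ordered_set_partitions :: "nat \<Rightarrow> nat \<Rightarrow> (nat \<Rightarrow> nat set) set" where
  "ordered_set_partitions m k =
     {I. (\<forall>j<k. I j \<noteq> {}) \<and> (\<forall>j<k. \<forall>l<k. j \<noteq> l \<longrightarrow> I j \<inter> I l = {})
         \<and> (\<Union>j<k. I j) = {1..m} \<and> (\<forall>j\<ge>k. I j = {})}"

definition weak_compositions :: "nat \<Rightarrow> nat \<Rightarrow> (nat \<Rightarrow> nat) set" where
  "weak_compositions k N = {d. (\<forall>j\<ge>k. d j = 0) \<and> (\<Sum>j<k. d j) = N}"

text \<open>P_{g,m}(a_1,...,a_m); the arguments a_1..a_m are the values a 1, ..., a m.\<close>
definition P :: "nat \<Rightarrow> nat \<Rightarrow> (nat \<Rightarrow> nat) \<Rightarrow> real" where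
  "P g m a =
    (\<Sum>k=1..m. (-1)^k * fact (2*g-3+k) / fact k *
      (\<Sum>I\<in>ordered_set_partitions m k. \<Sum>d\<in>weak_compositions k (g-2+m).
         \<Prod>j<k. real ((2 * (\<Sum>l\<in>I j. a l) + 1) choose (2 * d j)) *
                (\<Prod>i=1..card (I j) - 1. 2 * real (d j) + 1 - 2 * real i)))"

end

theory Submission
  imports Defs
begin


definition f :: "nat \<Rightarrow> nat \<Rightarrow> nat \<Rightarrow> real" where
  "f s A d = real ((2*A+1) choose (2*d)) * (\<Prod>i=1..s-1. 2*real d + 1 - 2*real i)"

lemma prod_shift1: "(\<Prod>i=1..Suc (m::nat). (x::real) + 2 - 2*real i) = x * (\<Prod>i=1..m. x - 2*real i)"
proof (induction m)
  case 0 then show ?case by simp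
next
  case (Suc m)
  have "(\<Prod>i=1..Suc (Suc m). x + 2 - 2*real i) = (\<Prod>i=1..Suc m. x + 2 - 2*real i) * (x + 2 - 2*real (Suc (Suc m)))"
    by (simp add: prod.cl_ivl_Suc)
  also have "\<dots> = x * ((\<Prod>i=1..m. x - 2*real i) * (x - 2 * real (Suc m)))" using Suc by (simp add: algebra_simps)
  also have "\<dots> = x * (\<Prod>i=1..Suc m. x - 2*real i)" by (simp add: prod.cl_ivl_Suc)
  finally show ?case .
qed

lemma binom_aux: "real (Suc k) * real (n choose Suc k) = (real n - real k) * real (n choose k)"
proof (cases "k \<le> n")
  case True
  show ?thesis
  proof (cases n)
    case 0 with True show ?thesis by simp
  next
    case (Suc m)
    have "Suc k * (Suc m choose Suc k) = Suc m * (m choose k)" by (rule Suc_times_binomial)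
    moreover have "(Suc m - k) * (Suc m choose k) = Suc m * ((Suc m - 1) choose k)" by (rule binomial_absorb_comp)
    ultimately have "Suc k * (n choose Suc k) = (n - k) * (n choose k)" using Suc by simp
    then have "real (Suc k * (n choose Suc k)) = real ((n - k) * (n choose k))" by simp
    then show ?thesis using True by (simp add: of_nat_diff algebra_simps)
  qed
next
  case False then show ?thesis by (simp add: binomial_eq_0)
qed

lemma f_step0: "s \<ge> 1 \<Longrightarrow> f (Suc s) (Suc A) 0 = (1 - 2*real s) * f s A 0"
  by (cases s) (auto simp: f_def prod.cl_ivl_Suc)

lemma f_stepS:
  assumes "s \<ge> 1"
  shows "f (Suc s) (Suc A) (Suc e) = (2*real e + 3 - 2*real s) * f s A (Suc e) + (4*real A + 3 - 2*real e) * f s A e"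
proof -
  obtain m where s: "s = Suc m" using assms by (cases s) auto
  define U where "U = (\<Prod>i=1..m. 2*real e + 1 - 2*real i)"
  define V where "V = (\<Prod>i=1..m. 2*real (Suc e) + 1 - 2*real i)"
  have p1: "(\<Prod>i=1..Suc m. 2*real (Suc e) + 1 - 2*real i) = (2*real e + 1) * U"
    using prod_shift1[where m=m and x="2*real e + 1"] unfolding U_def by (simp add: algebra_simps)
  have p2: "(\<Prod>i=1..Suc m. 2*real (Suc e) + 1 - 2*real i) = V * (2*real e + 3 - 2*real s)"
    unfolding V_def s by (simp add: prod.cl_ivl_Suc algebra_simps)
  define n where "n = 2*A+1"
  have b1: "(2*Suc A+1) choose (2*Suc e) = (n choose (2*e)) + 2*(n choose Suc (2*e)) + (n choose Suc (Suc (2*e)))"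
    unfolding n_def by (simp add: numeral_2_eq_2)
  have b2: "real (Suc (2*e)) * real (n choose Suc (2*e)) = (real n - real (2*e)) * real (n choose (2*e))"
    by (rule binom_aux)
  have lhs: "f (Suc s) (Suc A) (Suc e) = real ((2*Suc A+1) choose (2*Suc e)) * ((2*real e + 1) * U)"
    unfolding f_def using p1 s by simp
  have r1: "f s A (Suc e) = real (n choose Suc (Suc (2*e))) * V"
    unfolding f_def V_def s n_def by (simp add: numeral_2_eq_2)
  have r2: "f s A e = real (n choose (2*e)) * U"
    unfolding f_def U_def s n_def by simp
  have e1: "(2*real e + 3 - 2*real s) * V = (2*real e + 1) * U" using p1 p2 by simp
  have rn: "real n = 2*real A + 1" unfolding n_def by simp
  define x where "x = real (n choose (2*e))"
  define y where "y = real (n choose Suc (2*e))"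
  define z where "z = real (n choose Suc (Suc (2*e)))"
  have b2': "(2*real e + 1) * y = (2*real A + 1 - 2*real e) * x" using b2 unfolding x_def y_def rn by (simp add: add.commute)
  have "f (Suc s) (Suc A) (Suc e) = (x + 2*y + z) * ((2*real e + 1) * U)"
    unfolding lhs b1 x_def y_def z_def by simp
  also have "\<dots> = z * ((2*real e + 1) * U) + 2 * ((2*real e + 1) * y) * U + x * (2*real e + 1) * U"
    by (simp add: algebra_simps)
  also have "\<dots> = (2*real e + 3 - 2*real s) * (z * V) + (4*real A + 3 - 2*real e) * (x * U)"
    unfolding b2' e1[symmetric] by (simp add: algebra_simps)
  finally show ?thesis unfolding r1 r2 x_def z_def .
qed

lemma f_step:
  assumes "s \<ge> 1"
  shows "f (Suc s) (Suc A) d = (2*real d + 1 - 2*real s) * f s A d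
           + (if 0 < d then (4*real A + 5 - 2*real d) * f s A (d-1) else 0)"
proof (cases d)
  case 0 then show ?thesis using f_step0[OF assms] by simp
next
  case (Suc e) then show ?thesis using f_stepS[OF assms, of A e] by (simp add: algebra_simps)
qed

lemma wc_mem: "d \<in> weak_compositions k N \<longleftrightarrow> (\<forall>j\<ge>k. d j = 0) \<and> (\<Sum>j<k. d j) = N"
  by (simp add: weak_compositions_def)

lemma wc_finite: "finite (weak_compositions k N)"
proof -
  have "weak_compositions k N \<subseteq> {d. \<forall>x. (x \<in> {..<k} \<longrightarrow> d x \<in> {..N}) \<and> (x \<notin> {..<k} \<longrightarrow> d x = 0)}"
  proof
    fix d assume d: "d \<in> weak_compositions k N"
    { fix x assume "x < k"
      then have "d x \<le> (\<Sum>j<k. d j)" by (intro member_le_sum) auto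
      then have "d x \<le> N" using d by (simp add: wc_mem) }
    then show "d \<in> {d. \<forall>x. (x \<in> {..<k} \<longrightarrow> d x \<in> {..N}) \<and> (x \<notin> {..<k} \<longrightarrow> d x = 0)}"
      using d by (auto simp: wc_mem)
  qed
  moreover have "finite {d. \<forall>x. (x \<in> {..<k} \<longrightarrow> d x \<in> {..N}) \<and> (x \<notin> {..<k} \<longrightarrow> (d::nat\<Rightarrow>nat) x = 0)}"
    by (rule finite_set_of_finite_funs) auto
  ultimately show ?thesis by (rule finite_subset)
qed

lemma sum_upd_lt: "j < (k::nat) \<Longrightarrow> (\<Sum>l<k. (d(j:=x)) l) + d j = (\<Sum>l<k. d l) + (x::nat)"
proof -
  assume j: "j < k"
  have "(\<Sum>l<k. (d(j:=x)) l) = x + (\<Sum>l\<in>{..<k}-{j}. (d(j:=x)) l)"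
    using j by (subst sum.remove[of "{..<k}" j]) auto
  also have "(\<Sum>l\<in>{..<k}-{j}. (d(j:=x)) l) = (\<Sum>l\<in>{..<k}-{j}. d l)" by (rule sum.cong) auto
  finally have 1: "(\<Sum>l<k. (d(j:=x)) l) = x + (\<Sum>l\<in>{..<k}-{j}. d l)" .
  have 2: "(\<Sum>l<k. d l) = d j + (\<Sum>l\<in>{..<k}-{j}. d l)"
    using j by (subst sum.remove[of "{..<k}" j]) auto
  show ?thesis using 1 2 by simp
qed

lemma shift_sum:
  assumes j: "j < k"
  shows "(\<Sum>d\<in>weak_compositions k (Suc M). if 0 < d j then F (d(j := d j - 1)) else 0)
         = (\<Sum>d\<in>weak_compositions k M. (F d :: real))"
proof -
  have "(\<Sum>d\<in>weak_compositions k (Suc M). if 0 < d j then F (d(j := d j - 1)) else 0)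
      = (\<Sum>d\<in>{d\<in>weak_compositions k (Suc M). 0 < d j}. F (d(j := d j - 1)))"
    by (rule sum.inter_filter[symmetric]) (rule wc_finite)
  also have "\<dots> = (\<Sum>d\<in>weak_compositions k M. F d)"
  proof (rule sum.reindex_bij_witness[where i="\<lambda>d. d(j := Suc (d j))" and j="\<lambda>d. d(j := d j - 1)"])
    fix d assume "d \<in> {d\<in>weak_compositions k (Suc M). 0 < d j}"
    then show "d(j := d j - 1, j := Suc ((d(j := d j - 1)) j)) = d" by auto
  next
    fix d assume d: "d \<in> {d\<in>weak_compositions k (Suc M). 0 < d j}"
    then have "(\<Sum>l<k. (d(j:=d j - 1)) l) + d j = (\<Sum>l<k. d l) + (d j - 1)" using sum_upd_lt[OF j] by blast
    then show "d(j := d j - 1) \<in> weak_compositions k M" using d j by (auto simp: wc_mem)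
  next
    fix d assume "d \<in> weak_compositions k M"
    then show "d(j := Suc (d j), j := (d(j := Suc (d j))) j - 1) = d" by auto
  next
    fix d assume d: "d \<in> weak_compositions k M"
    then have "(\<Sum>l<k. (d(j:=Suc (d j))) l) + d j = (\<Sum>l<k. d l) + Suc (d j)" using sum_upd_lt[OF j] by blast
    then show "d(j := Suc (d j)) \<in> {d\<in>weak_compositions k (Suc M). 0 < d j}" using d j by (auto simp: wc_mem)
  next
    fix d assume "d \<in> {d\<in>weak_compositions k (Suc M). 0 < d j}"
    then show "F (d(j := d j - 1)) = F (d(j := d j - 1))" by simp
  qed
  finally show ?thesis .
qed

lemma prod_if_split:
  assumes j: "j < (k::nat)"
  shows "(\<Prod>l<k. if l = j then c * v j + b * w else v l)
         = c * (\<Prod>l<k. v l) + b * (\<Prod>l<k. if l = j then w else (v l :: real))"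
proof -
  have 1: "(\<Prod>l<k. if l = j then c * v j + b * w else v l) = (c * v j + b * w) * (\<Prod>l\<in>{..<k}-{j}. v l)"
    using j by (subst prod.remove[of "{..<k}" j]) (auto intro!: prod.cong)
  have 2: "(\<Prod>l<k. v l) = v j * (\<Prod>l\<in>{..<k}-{j}. v l)"
    using j by (subst prod.remove[of "{..<k}" j]) auto
  have 3: "(\<Prod>l<k. if l = j then w else v l) = w * (\<Prod>l\<in>{..<k}-{j}. v l)"
    using j by (subst prod.remove[of "{..<k}" j]) (auto intro!: prod.cong)
  show ?thesis unfolding 1 2 3 by (simp add: algebra_simps)
qed

lemma key:
  assumes s1: "\<forall>l<k. s l \<ge> 1"
  shows "(\<Sum>j<k. \<Sum>d\<in>weak_compositions k (Suc M).
            \<Prod>l<k. if l = j then f (Suc (s l)) (Suc (A l)) (d l) else f (s l) (A l) (d l))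
       = (2*real (Suc M) + real k - 2*(\<Sum>l<k. real (s l))) *
            (\<Sum>d\<in>weak_compositions k (Suc M). \<Prod>l<k. f (s l) (A l) (d l))
         + (4*(\<Sum>l<k. real (A l)) + 3*real k - 2*real M) *
            (\<Sum>d\<in>weak_compositions k M. \<Prod>l<k. f (s l) (A l) (d l))"
proof -
  define W where "W l e = f (s l) (A l) e" for l e
  define F where "F j d = (4*real (A j) + 3 - 2*real (d j)) * (\<Prod>l<k. W l (d l))" for j d
  have pt: "(\<Prod>l<k. if l = j then f (Suc (s l)) (Suc (A l)) (d l) else f (s l) (A l) (d l))
      = (2*real (d j) + 1 - 2*real (s j)) * (\<Prod>l<k. W l (d l))
        + (if 0 < d j then F j (d(j := d j - 1)) else 0)" if j: "j < k" for j d
  proof -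
    have "(\<Prod>l<k. if l = j then f (Suc (s l)) (Suc (A l)) (d l) else f (s l) (A l) (d l))
       = (\<Prod>l<k. if l = j then (2*real (d j) + 1 - 2*real (s j)) * W j (d j) +
             (if 0 < d j then 4*real (A j) + 5 - 2*real (d j) else 0) * W j (d j - 1) else W l (d l))"
      using s1 j by (intro prod.cong refl) (auto simp: W_def f_step)
    also have "\<dots> = (2*real (d j) + 1 - 2*real (s j)) * (\<Prod>l<k. W l (d l))
        + (if 0 < d j then 4*real (A j) + 5 - 2*real (d j) else 0) * (\<Prod>l<k. if l = j then W j (d j - 1) else W l (d l))"
      by (rule prod_if_split[OF j])
    also have "(if 0 < d j then 4*real (A j) + 5 - 2*real (d j) else 0) * (\<Prod>l<k. if l = j then W j (d j - 1) else W l (d l))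
        = (if 0 < d j then F j (d(j := d j - 1)) else 0)"
    proof (cases "0 < d j")
      case True
      have "(\<Prod>l<k. W l ((d(j := d j - 1)) l)) = (\<Prod>l<k. if l = j then W j (d j - 1) else W l (d l))"
        by (rule prod.cong) auto
      then show ?thesis using True by (simp add: F_def of_nat_diff algebra_simps)
    qed simp
    finally show ?thesis .
  qed
  have "(\<Sum>j<k. \<Sum>d\<in>weak_compositions k (Suc M).
            \<Prod>l<k. if l = j then f (Suc (s l)) (Suc (A l)) (d l) else f (s l) (A l) (d l))
      = (\<Sum>j<k. \<Sum>d\<in>weak_compositions k (Suc M). (2*real (d j) + 1 - 2*real (s j)) * (\<Prod>l<k. W l (d l)))
        + (\<Sum>j<k. \<Sum>d\<in>weak_compositions k (Suc M). (if 0 < d j then F j (d(j := d j - 1)) else 0))"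
    by (simp add: pt sum.distrib)
  also have "(\<Sum>j<k. \<Sum>d\<in>weak_compositions k (Suc M). (if 0 < d j then F j (d(j := d j - 1)) else 0))
      = (\<Sum>j<k. \<Sum>d\<in>weak_compositions k M. F j d)"
    by (intro sum.cong refl shift_sum) simp
  also have "\<dots> = (\<Sum>d\<in>weak_compositions k M. \<Sum>j<k. F j d)" by (rule sum.swap)
  also have "\<dots> = (\<Sum>d\<in>weak_compositions k M. (4*(\<Sum>l<k. real (A l)) + 3*real k - 2*real M) * (\<Prod>l<k. W l (d l)))"
  proof (rule sum.cong[OF refl])
    fix d assume d: "d \<in> weak_compositions k M"
    have "(\<Sum>j<k. real (d j)) = real M" using d by (simp add: wc_mem flip: of_nat_sum)
    then show "(\<Sum>j<k. F j d) = (4*(\<Sum>l<k. real (A l)) + 3*real k - 2*real M) * (\<Prod>l<k. W l (d l))"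
      unfolding F_def by (simp add: sum_distrib_right[symmetric] sum.distrib sum_subtractf sum_distrib_left[symmetric])
  qed
  also have "(\<Sum>j<k. \<Sum>d\<in>weak_compositions k (Suc M). (2*real (d j) + 1 - 2*real (s j)) * (\<Prod>l<k. W l (d l)))
      = (\<Sum>d\<in>weak_compositions k (Suc M). \<Sum>j<k. (2*real (d j) + 1 - 2*real (s j)) * (\<Prod>l<k. W l (d l)))"
    by (rule sum.swap)
  also have "\<dots> = (\<Sum>d\<in>weak_compositions k (Suc M). (2*real (Suc M) + real k - 2*(\<Sum>l<k. real (s l))) * (\<Prod>l<k. W l (d l)))"
  proof (rule sum.cong[OF refl])
    fix d assume d: "d \<in> weak_compositions k (Suc M)"
    have "(\<Sum>j<k. real (d j)) = real (Suc M)" using d by (simp add: wc_mem flip: of_nat_sum)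
    then show "(\<Sum>j<k. (2*real (d j) + 1 - 2*real (s j)) * (\<Prod>l<k. W l (d l))) = (2*real (Suc M) + real k - 2*(\<Sum>l<k. real (s l))) * (\<Prod>l<k. W l (d l))"
      by (simp add: sum_distrib_right[symmetric] sum.distrib sum_subtractf sum_distrib_left[symmetric])
  qed
  finally show ?thesis by (simp add: W_def sum_distrib_left)
qed

definition sk :: "nat \<Rightarrow> nat \<Rightarrow> nat" where "sk p j = (if j < p then j else Suc j)"
definition ins :: "nat \<Rightarrow> 'a \<Rightarrow> (nat \<Rightarrow> 'a) \<Rightarrow> nat \<Rightarrow> 'a" where
  "ins p x F = (\<lambda>j. if j < p then F j else if j = p then x else F (j - 1))"
definition del :: "nat \<Rightarrow> (nat \<Rightarrow> 'a) \<Rightarrow> nat \<Rightarrow> 'a" where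
  "del p F = (\<lambda>j. F (sk p j))"

lemma ins_sk[simp]: "ins p x F (sk p j) = F j" by (simp add: ins_def sk_def)
lemma ins_p[simp]: "ins p x F p = x" by (simp add: ins_def)
lemma del_ins[simp]: "del p (ins p x F) = F" by (simp add: del_def)
lemma ins_del: "ins p (F p) (del p F) = F"
  by (auto simp: ins_def del_def sk_def fun_eq_iff)
lemma sk_neq[simp]: "sk p j \<noteq> p" by (simp add: sk_def)
lemma sk_inj: "sk p i = sk p j \<longleftrightarrow> i = j" by (auto simp: sk_def split: if_splits)

lemma idx_split: "p \<le> k \<Longrightarrow> {..<Suc k} = insert p (sk p ` {..<k})"
proof (rule set_eqI, rule iffI)
  fix x assume p: "p \<le> k" and x: "x \<in> {..<Suc k}"
  show "x \<in> insert p (sk p ` {..<k})"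
  proof (cases "x < p")
    case True then have "sk p x = x" by (simp add: sk_def)
    moreover have "x \<in> {..<k}" using True p by simp
    ultimately have "x \<in> sk p ` {..<k}" by (metis image_eqI)
    then show ?thesis by simp
  next
    case False
    show ?thesis
    proof (cases "x = p")
      case False
      with \<open>\<not> x < p\<close> obtain y where "x = Suc y" "p \<le> y" by (cases x) auto
      then have "sk p y = x" "y < k" using x by (auto simp: sk_def)
      then show ?thesis by force
    qed simp
  qed
qed (auto simp: sk_def)

lemma prod_idx: "p \<le> k \<Longrightarrow> (\<Prod>j<Suc k. G j) = G p * (\<Prod>j<k. G (sk p j))"
proof -
  assume p: "p \<le> k"
  have "(\<Prod>j<Suc k. G j) = (\<Prod>j\<in>insert p (sk p ` {..<k}). G j)" using idx_split[OF p] by simp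
  also have "\<dots> = G p * (\<Prod>j\<in>sk p ` {..<k}. G j)" by (subst prod.insert) (auto simp: sk_def)
  also have "(\<Prod>j\<in>sk p ` {..<k}. G j) = (\<Prod>j<k. G (sk p j))"
    by (subst prod.reindex) (auto simp: inj_on_def sk_inj)
  finally show ?thesis .
qed

lemma sum_idx: "p \<le> k \<Longrightarrow> (\<Sum>j<Suc k. G j) = G p + (\<Sum>j<k. G (sk p j))"
proof -
  assume p: "p \<le> k"
  have "(\<Sum>j<Suc k. G j) = (\<Sum>j\<in>insert p (sk p ` {..<k}). G j)" using idx_split[OF p] by simp
  also have "\<dots> = G p + (\<Sum>j\<in>sk p ` {..<k}. G j)" by (subst sum.insert) (auto simp: sk_def)
  also have "(\<Sum>j\<in>sk p ` {..<k}. G j) = (\<Sum>j<k. G (sk p j))"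
    by (subst sum.reindex) (auto simp: inj_on_def sk_inj)
  finally show ?thesis .
qed

lemma UN_idx: "p \<le> k \<Longrightarrow> (\<Union>j<Suc k. G j) = G p \<union> (\<Union>j<k. G (sk p j))"
  using idx_split[of p k] by auto

lemma sing_sum:
  assumes p: "p \<le> k"
  shows "(\<Sum>d\<in>weak_compositions (Suc k) N. h (d p) * \<Phi> (del p d))
       = (\<Sum>e\<le>N. h e * (\<Sum>d\<in>weak_compositions k (N - e). (\<Phi> d :: real)))"
proof -
  have "(\<Sum>e\<le>N. h e * (\<Sum>d\<in>weak_compositions k (N - e). \<Phi> d))
      = (\<Sum>(e,d)\<in>(SIGMA e:{..N}. weak_compositions k (N - e)). h e * \<Phi> d)"
    by (simp add: sum_distrib_left sum.Sigma wc_finite split_def)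
  also have "\<dots> = (\<Sum>d\<in>weak_compositions (Suc k) N. h (d p) * \<Phi> (del p d))"
  proof (rule sum.reindex_bij_witness[where i="\<lambda>d. (d p, del p d)" and j="\<lambda>(e,d). ins p e d"])
    fix d assume "d \<in> weak_compositions (Suc k) N"
    then show "(case (d p, del p d) of (e, d) \<Rightarrow> ins p e d) = d" by (simp add: ins_del)
  next
    fix d assume d: "d \<in> weak_compositions (Suc k) N"
    have s: "(\<Sum>j<Suc k. d j) = d p + (\<Sum>j<k. del p d j)" using sum_idx[OF p] by (simp add: del_def)
    have z: "\<forall>j\<ge>k. del p d j = 0" using d p by (auto simp: wc_mem del_def sk_def)
    show "(d p, del p d) \<in> (SIGMA e:{..N}. weak_compositions k (N - e))"
      using d s z by (auto simp: wc_mem)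
  next
    fix ed assume "ed \<in> (SIGMA e:{..N}. weak_compositions k (N - e))"
    then show "((case ed of (e, d) \<Rightarrow> ins p e d) p, del p (case ed of (e, d) \<Rightarrow> ins p e d)) = ed"
      by auto
  next
    fix ed assume ed: "ed \<in> (SIGMA e:{..N}. weak_compositions k (N - e))"
    obtain e d where ed': "ed = (e,d)" by (cases ed)
    have e: "e \<le> N" and d: "d \<in> weak_compositions k (N - e)" using ed ed' by auto
    have s: "(\<Sum>j<Suc k. ins p e d j) = e + (\<Sum>j<k. d j)" using sum_idx[OF p, of "ins p e d"] by simp
    have z: "\<forall>j\<ge>Suc k. ins p e d j = 0" using d p by (auto simp: wc_mem ins_def)
    show "(case ed of (e, d) \<Rightarrow> ins p e d) \<in> weak_compositions (Suc k) N"
      using s z e d ed' by (auto simp: wc_mem)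
  next
    fix ed assume "ed \<in> (SIGMA e:{..N}. weak_compositions k (N - e))"
    show "h ((case ed of (e, d) \<Rightarrow> ins p e d) p) * \<Phi> (del p (case ed of (e, d) \<Rightarrow> ins p e d)) = (case ed of (e, d) \<Rightarrow> h e * \<Phi> d)"
      by (auto split: prod.splits)
  qed
  finally show ?thesis by simp
qed



lemma osp_mem: "I \<in> ordered_set_partitions m k \<longleftrightarrow>
   (\<forall>j<k. I j \<noteq> {}) \<and> (\<forall>j<k. \<forall>l<k. j \<noteq> l \<longrightarrow> I j \<inter> I l = {})
         \<and> (\<Union>j<k. I j) = {1..m} \<and> (\<forall>j\<ge>k. I j = {})"
  by (simp add: ordered_set_partitions_def)

lemma osp_sub: "I \<in> ordered_set_partitions m k \<Longrightarrow> I j \<subseteq> {1..m}"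
  unfolding osp_mem by (cases "j < k") auto

lemma osp_lt: "I \<in> ordered_set_partitions m k \<Longrightarrow> x \<in> I j \<Longrightarrow> j < k"
  unfolding osp_mem by (metis empty_iff not_less)

lemma osp_uniq: "I \<in> ordered_set_partitions m k \<Longrightarrow> x \<in> I j \<Longrightarrow> x \<in> I l \<Longrightarrow> j = l"
proof (rule ccontr)
  assume I: "I \<in> ordered_set_partitions m k" and x: "x \<in> I j" "x \<in> I l" and jl: "j \<noteq> l"
  have "j < k" "l < k" using osp_lt[OF I] x by auto
  then have "I j \<inter> I l = {}" using I jl unfolding osp_mem by blast
  then show False using x by blast
qed

lemma osp_finite: "finite (ordered_set_partitions m k)"
proof -
  have "ordered_set_partitions m k \<subseteq> {I. \<forall>x. (x \<in> {..<k} \<longrightarrow> I x \<in> Pow {1..m}) \<and> (x \<notin> {..<k} \<longrightarrow> I x = {})}"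
  proof
    fix I assume I: "I \<in> ordered_set_partitions m k"
    then show "I \<in> {I. \<forall>x. (x \<in> {..<k} \<longrightarrow> I x \<in> Pow {1..m}) \<and> (x \<notin> {..<k} \<longrightarrow> I x = {})}"
      using osp_sub[OF I] by (auto simp: osp_mem)
  qed
  moreover have "finite {I. \<forall>x. (x \<in> {..<k} \<longrightarrow> I x \<in> Pow {1..m}) \<and> (x \<notin> {..<k} \<longrightarrow> (I::nat\<Rightarrow>nat set) x = {})}"
    by (rule finite_set_of_finite_funs) auto
  ultimately show ?thesis by (rule finite_subset)
qed

lemma osp_ins:
  assumes I: "I \<in> ordered_set_partitions n k" and p: "p \<le> k"
  shows "ins p {Suc n} I \<in> ordered_set_partitions (Suc n) (Suc k)"
proof -
  have sub: "\<And>j. I j \<subseteq> {1..n}" using osp_sub[OF I] .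
  have ne: "\<And>j. j < k \<Longrightarrow> I j \<noteq> {}" and dj: "\<And>j l. j < k \<Longrightarrow> l < k \<Longrightarrow> j \<noteq> l \<Longrightarrow> I j \<inter> I l = {}"
    and un: "(\<Union>j<k. I j) = {1..n}" and z: "\<And>j. j \<ge> k \<Longrightarrow> I j = {}" using I unfolding osp_mem by auto
  have nsub: "\<And>j. Suc n \<notin> I j" using sub by (meson atLeastAtMost_iff not_less_eq_eq order_refl subsetD)
  have 1: "\<forall>j<Suc k. ins p {Suc n} I j \<noteq> {}"
    using ne p by (auto simp: ins_def)
  have 2: "\<forall>j<Suc k. \<forall>l<Suc k. j \<noteq> l \<longrightarrow> ins p {Suc n} I j \<inter> ins p {Suc n} I l = {}"
  proof (intro allI impI)
    fix j l assume j: "j < Suc k" and l: "l < Suc k" and jl: "j \<noteq> l"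
    show "ins p {Suc n} I j \<inter> ins p {Suc n} I l = {}"
      using j l jl p nsub dj[of j l] dj[of "j - 1" l] dj[of j "l - 1"] dj[of "j - 1" "l - 1"]
      unfolding ins_def by (auto split: if_splits)
  qed
  have 3: "(\<Union>j<Suc k. ins p {Suc n} I j) = {1..Suc n}"
    using UN_idx[OF p, of "ins p {Suc n} I"] un by auto
  have 4: "\<forall>j\<ge>Suc k. ins p {Suc n} I j = {}" using z p by (auto simp: ins_def)
  show ?thesis unfolding osp_mem using 1 2 3 4 by blast
qed

lemma osp_del:
  assumes I: "I \<in> ordered_set_partitions (Suc n) (Suc k)" and Ip: "I p = {Suc n}"
  shows "p \<le> k" "del p I \<in> ordered_set_partitions n k"
proof -
  show p: "p \<le> k" using osp_lt[OF I, of "Suc n" p] Ip by auto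
  have ne: "\<And>j. j < Suc k \<Longrightarrow> I j \<noteq> {}" and dj: "\<And>j l. j < Suc k \<Longrightarrow> l < Suc k \<Longrightarrow> j \<noteq> l \<Longrightarrow> I j \<inter> I l = {}"
    and un: "(\<Union>j<Suc k. I j) = {1..Suc n}" and z: "\<And>j. j \<ge> Suc k \<Longrightarrow> I j = {}" using I unfolding osp_mem by auto
  have skl: "\<And>j. j < k \<Longrightarrow> sk p j < Suc k" by (auto simp: sk_def)
  have 1: "\<forall>j<k. del p I j \<noteq> {}" using ne skl by (auto simp: del_def)
  have 2: "\<forall>j<k. \<forall>l<k. j \<noteq> l \<longrightarrow> del p I j \<inter> del p I l = {}"
  proof (intro allI impI)
    fix j l assume "j < k" "l < k" "j \<noteq> l"
    then show "del p I j \<inter> del p I l = {}" unfolding del_def using dj[of "sk p j" "sk p l"] skl sk_inj by simp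
  qed
  have nin: "\<And>j. j < k \<Longrightarrow> Suc n \<notin> I (sk p j)"
  proof
    fix j assume "Suc n \<in> I (sk p j)"
    then have "sk p j = p" using osp_uniq[OF I, of "Suc n" "sk p j" p] Ip by simp
    then show False by simp
  qed
  have "(\<Union>j<Suc k. I j) = I p \<union> (\<Union>j<k. I (sk p j))" by (rule UN_idx[OF p])
  then have "(\<Union>j<k. I (sk p j)) = {1..Suc n} - {Suc n}" using un Ip nin by auto
  then have 3: "(\<Union>j<k. del p I j) = {1..n}" by (auto simp: del_def)
  have 4: "\<forall>j\<ge>k. del p I j = {}" using z p by (auto simp: del_def sk_def)
  show "del p I \<in> ordered_set_partitions n k" unfolding osp_mem using 1 2 3 4 by blast
qed

lemma osp_add:
  assumes I: "I \<in> ordered_set_partitions n (Suc k)" and j: "j < Suc k"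
  shows "I(j := insert (Suc n) (I j)) \<in> ordered_set_partitions (Suc n) (Suc k)"
proof -
  have sub: "\<And>j. I j \<subseteq> {1..n}" using osp_sub[OF I] .
  have nsub: "\<And>j. Suc n \<notin> I j" using sub by (meson atLeastAtMost_iff not_less_eq_eq order_refl subsetD)
  have ne: "\<And>j. j < Suc k \<Longrightarrow> I j \<noteq> {}" and dj: "\<And>j l. j < Suc k \<Longrightarrow> l < Suc k \<Longrightarrow> j \<noteq> l \<Longrightarrow> I j \<inter> I l = {}"
    and un: "(\<Union>j<Suc k. I j) = {1..n}" and z: "\<And>j. j \<ge> Suc k \<Longrightarrow> I j = {}" using I unfolding osp_mem by auto
  have 1: "\<forall>l<Suc k. (I(j := insert (Suc n) (I j))) l \<noteq> {}" using ne by auto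
  have 2: "\<forall>a<Suc k. \<forall>b<Suc k. a \<noteq> b \<longrightarrow> (I(j := insert (Suc n) (I j))) a \<inter> (I(j := insert (Suc n) (I j))) b = {}"
    using dj nsub by auto
  have "(\<Union>l<Suc k. (I(j := insert (Suc n) (I j))) l) = insert (Suc n) (\<Union>l<Suc k. I l)"
    using j by (auto split: if_splits)
  then have 3: "(\<Union>l<Suc k. (I(j := insert (Suc n) (I j))) l) = {1..Suc n}" using un by auto
  have 4: "\<forall>l\<ge>Suc k. (I(j := insert (Suc n) (I j))) l = {}" using z j by auto
  show ?thesis unfolding osp_mem using 1 2 3 4 by blast
qed

lemma osp_rem:
  assumes I: "I \<in> ordered_set_partitions (Suc n) (Suc k)" and j: "Suc n \<in> I j" and ns: "I j \<noteq> {Suc n}"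
  shows "j < Suc k" "I(j := I j - {Suc n}) \<in> ordered_set_partitions n (Suc k)"
proof -
  show jk: "j < Suc k" using osp_lt[OF I j] .
  have ne: "\<And>j. j < Suc k \<Longrightarrow> I j \<noteq> {}" and dj: "\<And>j l. j < Suc k \<Longrightarrow> l < Suc k \<Longrightarrow> j \<noteq> l \<Longrightarrow> I j \<inter> I l = {}"
    and un: "(\<Union>j<Suc k. I j) = {1..Suc n}" and z: "\<And>j. j \<ge> Suc k \<Longrightarrow> I j = {}" using I unfolding osp_mem by auto
  have nin: "\<And>l. l \<noteq> j \<Longrightarrow> Suc n \<notin> I l" using osp_uniq[OF I, of "Suc n" j] j by blast
  have 1: "\<forall>l<Suc k. (I(j := I j - {Suc n})) l \<noteq> {}" using ne j ns by auto
  have 2: "\<forall>a<Suc k. \<forall>b<Suc k. a \<noteq> b \<longrightarrow> (I(j := I j - {Suc n})) a \<inter> (I(j := I j - {Suc n})) b = {}"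
    using dj by auto
  have "(\<Union>l<Suc k. (I(j := I j - {Suc n})) l) = (\<Union>l<Suc k. I l) - {Suc n}"
    using jk nin by (auto split: if_splits)
  then have 3: "(\<Union>l<Suc k. (I(j := I j - {Suc n})) l) = {1..n}" using un by auto
  have 4: "\<forall>l\<ge>Suc k. (I(j := I j - {Suc n})) l = {}" using z jk by auto
  show "I(j := I j - {Suc n}) \<in> ordered_set_partitions n (Suc k)" unfolding osp_mem using 1 2 3 4 by blast
qed



lemma nsub_osp: "I \<in> ordered_set_partitions n k \<Longrightarrow> Suc n \<notin> I j"
  using osp_sub[of I n k j] by auto

lemma part_split:
  "(\<Sum>I\<in>ordered_set_partitions (Suc n) (Suc k). (G I :: real))
   = (\<Sum>(p,I)\<in>{..k} \<times> ordered_set_partitions n k. G (ins p {Suc n} I))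
   + (\<Sum>(j,I)\<in>{..<Suc k} \<times> ordered_set_partitions n (Suc k). G (I(j := insert (Suc n) (I j))))"
proof -
  define S where "S = ordered_set_partitions (Suc n) (Suc k)"
  define SA where "SA = {I\<in>S. \<exists>p. I p = {Suc n}}"
  define SB where "SB = {I\<in>S. \<not>(\<exists>p. I p = {Suc n})}"
  define DA where "DA = {..k} \<times> ordered_set_partitions n k"
  define DB where "DB = {..<Suc k} \<times> ordered_set_partitions n (Suc k)"
  define fA where "fA = (\<lambda>(p::nat,I::nat\<Rightarrow>nat set). ins p {Suc n} I)"
  define fB where "fB = (\<lambda>(j::nat,I::nat\<Rightarrow>nat set). I(j := insert (Suc n) (I j)))"
  have finS: "finite S" unfolding S_def by (rule osp_finite)
  have "S = SA \<union> SB" "SA \<inter> SB = {}" unfolding SA_def SB_def by auto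
  then have 1: "(\<Sum>I\<in>S. G I) = (\<Sum>I\<in>SA. G I) + (\<Sum>I\<in>SB. G I)"
    using finS by (metis finite_Un sum.union_disjoint)
  have injA: "inj_on fA DA"
  proof (rule inj_onI)
    fix x y assume x: "x \<in> DA" and y: "y \<in> DA" and e: "fA x = fA y"
    obtain p I where xp: "x = (p,I)" by (cases x)
    obtain q J where yq: "y = (q,J)" by (cases y)
    have I: "I \<in> ordered_set_partitions n k" and J: "J \<in> ordered_set_partitions n k" and pk: "p \<le> k" and qk: "q \<le> k"
      using x y xp yq DA_def by auto
    have e': "ins p {Suc n} I = ins q {Suc n} J" using e xp yq fA_def by simp
    have "Suc n \<in> ins q {Suc n} J p" using e' by (metis ins_p singletonI)
    then have "q = p" using nsub_osp[OF J] unfolding ins_def by (auto split: if_splits)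
    then have "I = J" using e' by (metis del_ins)
    then show "x = y" using xp yq \<open>q = p\<close> by simp
  qed
  have imA: "fA ` DA = SA"
  proof
    show "fA ` DA \<subseteq> SA"
    proof
      fix I' assume "I' \<in> fA ` DA"
      then obtain p I where pI: "p \<le> k" "I \<in> ordered_set_partitions n k" and I': "I' = ins p {Suc n} I"
        unfolding DA_def fA_def by auto
      have "I' \<in> S" using osp_ins[OF pI(2) pI(1)] I' S_def by simp
      moreover have "I' p = {Suc n}" using I' by simp
      ultimately show "I' \<in> SA" unfolding SA_def by blast
    qed
  next
    show "SA \<subseteq> fA ` DA"
    proof
      fix I assume "I \<in> SA"
      then obtain p where I: "I \<in> S" and Ip: "I p = {Suc n}" unfolding SA_def by auto
      have "p \<le> k" "del p I \<in> ordered_set_partitions n k" using osp_del[OF I[unfolded S_def] Ip] by auto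
      moreover have "I = fA (p, del p I)" using ins_del[of p I] Ip unfolding fA_def by simp
      ultimately show "I \<in> fA ` DA" unfolding DA_def by blast
    qed
  qed
  have injB: "inj_on fB DB"
  proof (rule inj_onI)
    fix x y assume x: "x \<in> DB" and y: "y \<in> DB" and e: "fB x = fB y"
    obtain p I where xp: "x = (p,I)" by (cases x)
    obtain q J where yq: "y = (q,J)" by (cases y)
    have I: "I \<in> ordered_set_partitions n (Suc k)" and J: "J \<in> ordered_set_partitions n (Suc k)"
      using x y xp yq DB_def by auto
    have e': "I(p := insert (Suc n) (I p)) = J(q := insert (Suc n) (J q))" using e xp yq fB_def by simp
    have "Suc n \<in> (J(q := insert (Suc n) (J q))) p" using e' by (metis fun_upd_same insertI1)
    then have "q = p" using nsub_osp[OF J] by (auto split: if_splits)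
    have "I = J"
    proof
      fix l show "I l = J l"
      proof (cases "l = p")
        case True
        have "insert (Suc n) (I p) = insert (Suc n) (J p)" using e' \<open>q = p\<close> by (metis fun_upd_same)
        then have "I p = J p" using nsub_osp[OF I] nsub_osp[OF J] by (metis insert_ident)
        then show ?thesis using True by simp
      next
        case False
        then show ?thesis using e' \<open>q = p\<close> by (metis fun_upd_other)
      qed
    qed
    then show "x = y" using xp yq \<open>q = p\<close> by simp
  qed
  have imB: "fB ` DB = SB"
  proof
    show "fB ` DB \<subseteq> SB"
    proof
      fix I' assume "I' \<in> fB ` DB"
      then obtain j I where jI: "j < Suc k" "I \<in> ordered_set_partitions n (Suc k)" and I': "I' = I(j := insert (Suc n) (I j))"
        unfolding DB_def fB_def by auto
      have mem: "I' \<in> S" using osp_add[OF jI(2) jI(1)] I' S_def by simp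
      have ne: "I j \<noteq> {}" using jI unfolding osp_mem by auto
      have "\<not>(\<exists>p. I' p = {Suc n})"
      proof
        assume "\<exists>p. I' p = {Suc n}"
        then obtain p where p: "I' p = {Suc n}" by auto
        show False
        proof (cases "p = j")
          case True
          then have "insert (Suc n) (I j) = {Suc n}" using p I' by simp
          then have "I j \<subseteq> {Suc n}" by blast
          then show False using ne nsub_osp[OF jI(2), of j] by blast
        next
          case False
          then have "I p = {Suc n}" using p I' by simp
          then show False using nsub_osp[OF jI(2), of p] by simp
        qed
      qed
      then show "I' \<in> SB" using mem unfolding SB_def by simp
    qed
  next
    show "SB \<subseteq> fB ` DB"
    proof
      fix I assume "I \<in> SB"
      then have I: "I \<in> S" and ns: "\<And>p. I p \<noteq> {Suc n}" unfolding SB_def by auto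
      have "Suc n \<in> (\<Union>j<Suc k. I j)" using I unfolding S_def osp_mem by auto
      then obtain j where j: "Suc n \<in> I j" by auto
      have r: "j < Suc k" "I(j := I j - {Suc n}) \<in> ordered_set_partitions n (Suc k)"
        using osp_rem[OF I[unfolded S_def] j ns] by auto
      have "I = fB (j, I(j := I j - {Suc n}))" unfolding fB_def using j by (simp add: insert_absorb)
      then show "I \<in> fB ` DB" using r unfolding DB_def by blast
    qed
  qed
  have "(\<Sum>I\<in>SA. G I) = (\<Sum>x\<in>DA. G (fA x))" unfolding imA[symmetric] by (simp add: sum.reindex[OF injA])
  moreover have "(\<Sum>I\<in>SB. G I) = (\<Sum>x\<in>DB. G (fB x))" unfolding imB[symmetric] by (simp add: sum.reindex[OF injB])
  ultimately show ?thesis using 1 unfolding S_def DA_def DB_def fA_def fB_def by (simp add: case_prod_beta')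
qed



definition T :: "(nat\<Rightarrow>nat) \<Rightarrow> (nat \<Rightarrow> nat set) \<Rightarrow> nat \<Rightarrow> nat \<Rightarrow> real" where
  "T a I k N = (\<Sum>d\<in>weak_compositions k N. \<Prod>j<k. f (card (I j)) (sum a (I j)) (d j))"

definition KK :: "nat \<Rightarrow> nat \<Rightarrow> real" where
  "KK g k = (-1)^k * fact (2*g-3+k) / fact k"

lemma P_eq: "P g m a = (\<Sum>k=1..m. KK g k * (\<Sum>I\<in>ordered_set_partitions m k. T a I k (g-2+m)))"
  by (simp add: P_def T_def f_def KK_def)

lemma osp_card_sum:
  assumes I: "I \<in> ordered_set_partitions n k"
  shows "(\<Sum>l<k. card (I l)) = n" "(\<Sum>l<k. sum a (I l)) = sum a {1..n}"
proof -
  have fin: "\<And>l. finite (I l)" using osp_sub[OF I] by (meson finite_atLeastAtMost finite_subset)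
  have dj: "\<forall>i\<in>{..<k}. \<forall>j\<in>{..<k}. i \<noteq> j \<longrightarrow> I i \<inter> I j = {}" using I unfolding osp_mem by auto
  have un: "(\<Union>j<k. I j) = {1..n}" using I unfolding osp_mem by auto
  show "(\<Sum>l<k. card (I l)) = n"
    using card_UN_disjoint[of "{..<k}" I] fin dj un by simp
  show "(\<Sum>l<k. sum a (I l)) = sum a {1..n}"
    using sum.UNION_disjoint[of "{..<k}" I a] fin dj un by simp
qed

lemma osp_empty0: "n \<ge> 1 \<Longrightarrow> ordered_set_partitions n 0 = {}"
  by (auto simp: osp_mem)

lemma osp_empty_big: "k > n \<Longrightarrow> ordered_set_partitions n k = {}"
proof (rule ccontr)
  assume k: "k > n" and "ordered_set_partitions n k \<noteq> {}"
  then obtain I where I: "I \<in> ordered_set_partitions n k" by auto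
  have fin: "\<And>l. finite (I l)" using osp_sub[OF I] by (meson finite_atLeastAtMost finite_subset)
  have "\<And>l. l < k \<Longrightarrow> 1 \<le> card (I l)" using I fin unfolding osp_mem by (simp add: Suc_le_eq card_gt_0_iff)
  then have "(\<Sum>l<k. (1::nat)) \<le> (\<Sum>l<k. card (I l))" by (intro sum_mono) auto
  then show False using osp_card_sum(1)[OF I] k by simp
qed

lemma c32: "(3::nat) choose 2 = 3"
  by (simp add: numeral_3_eq_3 numeral_2_eq_2)

lemma three_sum: "(\<Sum>e\<le>Suc M. real (3 choose (2*e)) * X (Suc M - e)) = X (Suc M) + 3 * (X M :: real)"
proof -
  have "(\<Sum>e\<le>Suc M. real (3 choose (2*e)) * X (Suc M - e)) = (\<Sum>e\<in>{0,1}. real (3 choose (2*e)) * X (Suc M - e))"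
  proof (rule sum.mono_neutral_right)
    show "\<forall>e\<in>{..Suc M} - {0, 1}. real (3 choose (2 * e)) * X (Suc M - e) = 0"
      by (auto simp: binomial_eq_0)
  qed auto
  also have "\<dots> = X (Suc M) + 3 * X M" by (simp add: c32)
  finally show ?thesis .
qed

lemma singleton_part:
  assumes I: "I \<in> ordered_set_partitions n k" and p: "p \<le> k"
  shows "T (a(Suc n := 1)) (ins p {Suc n} I) (Suc k) (Suc M) = T a I k (Suc M) + 3 * T a I k M"
proof -
  have sa: "\<And>j. sum (a(Suc n := 1)) (I j) = sum a (I j)"
    using nsub_osp[OF I] by (intro sum.cong) auto
  have sa2: "\<And>j. (\<Sum>x\<in>I j. if x = Suc n then Suc 0 else a x) = sum a (I j)"
    using nsub_osp[OF I] by (intro sum.cong) auto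
  have "T (a(Suc n := 1)) (ins p {Suc n} I) (Suc k) (Suc M)
      = (\<Sum>d\<in>weak_compositions (Suc k) (Suc M). f 1 1 (d p) * (\<Prod>j<k. f (card (I j)) (sum a (I j)) (del p d j)))"
    unfolding T_def
  proof (rule sum.cong[OF refl])
    fix d
    show "(\<Prod>j<Suc k. f (card (ins p {Suc n} I j)) (sum (a(Suc n := 1)) (ins p {Suc n} I j)) (d j))
        = f 1 1 (d p) * (\<Prod>j<k. f (card (I j)) (sum a (I j)) (del p d j))"
      by (subst prod_idx[OF p]) (simp add: sa sa2 del_def)
  qed
  also have "\<dots> = (\<Sum>e\<le>Suc M. f 1 1 e * (\<Sum>d\<in>weak_compositions k (Suc M - e). \<Prod>j<k. f (card (I j)) (sum a (I j)) (d j)))"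
    by (rule sing_sum[OF p])
  also have "\<dots> = (\<Sum>e\<le>Suc M. real (3 choose (2*e)) * T a I k (Suc M - e))"
    by (simp add: f_def T_def numeral_3_eq_3)
  also have "\<dots> = T a I k (Suc M) + 3 * T a I k M" by (rule three_sum)
  finally show ?thesis .
qed

lemma join_part:
  assumes I: "I \<in> ordered_set_partitions n k" and j: "j < k"
  shows "T (a(Suc n := 1)) (I(j := insert (Suc n) (I j))) k N
       = (\<Sum>d\<in>weak_compositions k N. \<Prod>l<k. if l = j then f (Suc (card (I l))) (Suc (sum a (I l))) (d l)
                                           else f (card (I l)) (sum a (I l)) (d l))"
proof -
  have fin: "\<And>l. finite (I l)" using osp_sub[OF I] by (meson finite_atLeastAtMost finite_subset)
  have sa: "\<And>l. sum (a(Suc n := 1)) (I l) = sum a (I l)"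
    using nsub_osp[OF I] by (intro sum.cong) auto
  have sa2: "\<And>l. (\<Sum>x\<in>I l. if x = Suc n then Suc 0 else a x) = sum a (I l)"
    using nsub_osp[OF I] by (intro sum.cong) auto
  show ?thesis unfolding T_def
    by (intro sum.cong prod.cong refl) (auto simp: sa sa2 fin nsub_osp[OF I])
qed



definition JJ :: "(nat\<Rightarrow>nat) \<Rightarrow> (nat \<Rightarrow> nat set) \<Rightarrow> nat \<Rightarrow> nat \<Rightarrow> real" where
  "JJ a I k N = (\<Sum>j<k. \<Sum>d\<in>weak_compositions k N. \<Prod>l<k. if l = j then f (Suc (card (I l))) (Suc (sum a (I l))) (d l)
                                           else f (card (I l)) (sum a (I l)) (d l))"

lemma Sm_split:
  "(\<Sum>I'\<in>ordered_set_partitions (Suc n) (Suc k). T (a(Suc n := 1)) I' (Suc k) (Suc M))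
   = real (Suc k) * (\<Sum>I\<in>ordered_set_partitions n k. T a I k (Suc M) + 3 * T a I k M)
     + (\<Sum>I\<in>ordered_set_partitions n (Suc k). JJ a I (Suc k) (Suc M))"
proof -
  have A: "(\<Sum>(p,I)\<in>{..k} \<times> ordered_set_partitions n k. T (a(Suc n := 1)) (ins p {Suc n} I) (Suc k) (Suc M))
      = real (Suc k) * (\<Sum>I\<in>ordered_set_partitions n k. T a I k (Suc M) + 3 * T a I k M)"
  proof -
    have "(\<Sum>(p,I)\<in>{..k} \<times> ordered_set_partitions n k. T (a(Suc n := 1)) (ins p {Suc n} I) (Suc k) (Suc M))
        = (\<Sum>p\<le>k. \<Sum>I\<in>ordered_set_partitions n k. T (a(Suc n := 1)) (ins p {Suc n} I) (Suc k) (Suc M))"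
      by (rule sum.cartesian_product[symmetric])
    also have "\<dots> = (\<Sum>p\<le>k. \<Sum>I\<in>ordered_set_partitions n k. T a I k (Suc M) + 3 * T a I k M)"
      by (intro sum.cong refl singleton_part) auto
    also have "\<dots> = real (Suc k) * (\<Sum>I\<in>ordered_set_partitions n k. T a I k (Suc M) + 3 * T a I k M)"
      by simp
    finally show ?thesis .
  qed
  have B: "(\<Sum>(j,I)\<in>{..<Suc k} \<times> ordered_set_partitions n (Suc k). T (a(Suc n := 1)) (I(j := insert (Suc n) (I j))) (Suc k) (Suc M))
      = (\<Sum>I\<in>ordered_set_partitions n (Suc k). JJ a I (Suc k) (Suc M))"
  proof -
    have "(\<Sum>(j,I)\<in>{..<Suc k} \<times> ordered_set_partitions n (Suc k). T (a(Suc n := 1)) (I(j := insert (Suc n) (I j))) (Suc k) (Suc M))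
        = (\<Sum>j<Suc k. \<Sum>I\<in>ordered_set_partitions n (Suc k). T (a(Suc n := 1)) (I(j := insert (Suc n) (I j))) (Suc k) (Suc M))"
      by (rule sum.cartesian_product[symmetric])
    also have "\<dots> = (\<Sum>j<Suc k. \<Sum>I\<in>ordered_set_partitions n (Suc k). \<Sum>d\<in>weak_compositions (Suc k) (Suc M).
         \<Prod>l<Suc k. if l = j then f (Suc (card (I l))) (Suc (sum a (I l))) (d l) else f (card (I l)) (sum a (I l)) (d l))"
      by (intro sum.cong refl join_part) auto
    also have "\<dots> = (\<Sum>I\<in>ordered_set_partitions n (Suc k). JJ a I (Suc k) (Suc M))"
      unfolding JJ_def by (rule sum.swap)
    finally show ?thesis .
  qed
  show ?thesis using part_split[where n=n and k=k and G="\<lambda>I'. T (a(Suc n := 1)) I' (Suc k) (Suc M)"] A B by simp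
qed

lemma JJ_eval:
  assumes I: "I \<in> ordered_set_partitions n k"
  shows "JJ a I k (Suc M) = (2*real (Suc M) + real k - 2*real n) * T a I k (Suc M)
          + (4*real (sum a {1..n}) + 3*real k - 2*real M) * T a I k M"
proof -
  have fin: "\<And>l. finite (I l)" using osp_sub[OF I] by (meson finite_atLeastAtMost finite_subset)
  have s1: "\<forall>l<k. card (I l) \<ge> 1" using I fin unfolding osp_mem by (simp add: Suc_le_eq card_gt_0_iff)
  have c: "(\<Sum>l<k. real (card (I l))) = real n" using osp_card_sum(1)[OF I] by (simp flip: of_nat_sum)
  have s: "(\<Sum>l<k. real (sum a (I l))) = real (sum a {1..n})" using osp_card_sum(2)[OF I, of a] by (simp flip: of_nat_sum)
  show ?thesis
    using key[OF s1, where M=M and A="\<lambda>l. sum a (I l)"] unfolding JJ_def T_def c s .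
qed



lemma aux_KK: "(S::real) \<noteq> 0 \<Longrightarrow> (- c * (R * F)) / (S * fk) * S = - R * (c * F / fk)"
  by (simp add: field_simps)

lemma KK_Suc: "g \<ge> 2 \<Longrightarrow> KK g (Suc k) * real (Suc k) = - (2*real g - 2 + real k) * KK g k"
proof -
  assume g: "g \<ge> 2"
  have e: "2*g-3+Suc k = Suc (2*g-3+k)" by simp
  have r: "real (Suc (2*g-3+k)) = 2*real g - 2 + real k" using g by (simp add: of_nat_diff)
  have f1: "(fact (Suc (2*g-3+k)) :: real) = real (Suc (2*g-3+k)) * fact (2*g-3+k)" by (rule fact_Suc)
  have f2: "(fact (Suc k)::real) = real (Suc k) * fact k" by (rule fact_Suc)
  have nz: "(fact k :: real) \<noteq> 0" "real (Suc k) \<noteq> 0" by auto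
  have p1: "(-1::real)^Suc k = - ((-1)^k)" by simp
  show ?thesis unfolding KK_def e f1 f2 r p1
    by (rule aux_KK) simp
qed

lemma per_I:
  assumes I: "I \<in> ordered_set_partitions n k" and g: "g \<ge> 2" and sa: "sum a {1..n} = 2*g-3+n"
    and M: "M = g-2+n"
  shows "JJ a I k (Suc M) - (2*real g - 2 + real k) * (T a I k (Suc M) + 3 * T a I k M)
         = (2*real n - 2) * T a I k M"
proof -
  have rs: "real (sum a {1..n}) = 2*real g - 3 + real n" using sa g by (simp add: of_nat_diff)
  have rM: "real M = real g - 2 + real n" using M g by (simp add: of_nat_diff)
  show ?thesis unfolding JJ_eval[OF I] rs of_nat_Suc rM by (simp add: algebra_simps)
qed

lemma main:
  assumes g: "g \<ge> 2" and n: "n \<ge> 1" and sa: "sum a {1..n} = 2*g-3+n"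
  shows "P g (Suc n) (a(Suc n := 1)) = (2 * real n - 2) * P g n a"
proof -
  define M where "M = g-2+n"
  define X where "X k = (\<Sum>I\<in>ordered_set_partitions n k. T a I k (Suc M) + 3 * T a I k M)" for k
  define Y where "Y k = (\<Sum>I\<in>ordered_set_partitions n k. JJ a I k (Suc M))" for k
  have NM: "g - 2 + Suc n = Suc M" unfolding M_def by simp
  have "P g (Suc n) (a(Suc n := 1))
      = (\<Sum>k=Suc 0..Suc n. KK g k * (\<Sum>I\<in>ordered_set_partitions (Suc n) k. T (a(Suc n := 1)) I k (Suc M)))"
    unfolding P_eq NM by simp
  also have "\<dots> = (\<Sum>k=0..n. KK g (Suc k) * (\<Sum>I\<in>ordered_set_partitions (Suc n) (Suc k). T (a(Suc n := 1)) I (Suc k) (Suc M)))"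
    by (rule sum.shift_bounds_cl_Suc_ivl)
  also have "\<dots> = (\<Sum>k=0..n. KK g (Suc k) * real (Suc k) * X k) + (\<Sum>k=0..n. KK g (Suc k) * Y (Suc k))"
    unfolding Sm_split X_def Y_def by (simp add: sum.distrib algebra_simps)
  also have "(\<Sum>k=0..n. KK g (Suc k) * real (Suc k) * X k) = (\<Sum>k=1..n. - (2*real g - 2 + real k) * KK g k * X k)"
  proof -
    have "X 0 = 0" unfolding X_def using osp_empty0[OF n] by simp
    then have "(\<Sum>k=0..n. KK g (Suc k) * real (Suc k) * X k) = (\<Sum>k=Suc 0..n. KK g (Suc k) * real (Suc k) * X k)"
      by (simp add: sum.atLeast_Suc_atMost)
    also have "\<dots> = (\<Sum>k=1..n. - (2*real g - 2 + real k) * KK g k * X k)"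
      using KK_Suc[OF g] by simp
    finally show ?thesis .
  qed
  also have "(\<Sum>k=0..n. KK g (Suc k) * Y (Suc k)) = (\<Sum>k=1..n. KK g k * Y k)"
  proof -
    have "(\<Sum>k=0..n. KK g (Suc k) * Y (Suc k)) = (\<Sum>k=Suc 0..Suc n. KK g k * Y k)"
      by (rule sum.shift_bounds_cl_Suc_ivl[symmetric])
    also have "\<dots> = (\<Sum>k=1..n. KK g k * Y k) + KK g (Suc n) * Y (Suc n)"
      by (simp add: sum.cl_ivl_Suc)
    also have "Y (Suc n) = 0" unfolding Y_def using osp_empty_big[of n "Suc n"] by simp
    finally show ?thesis by simp
  qed
  also have "(\<Sum>k=1..n. - (2*real g - 2 + real k) * KK g k * X k) + (\<Sum>k=1..n. KK g k * Y k)
      = (\<Sum>k=1..n. KK g k * (Y k - (2*real g - 2 + real k) * X k))"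
    by (simp add: sum.distrib[symmetric] algebra_simps)
  also have "\<dots> = (\<Sum>k=1..n. KK g k * ((2*real n - 2) * (\<Sum>I\<in>ordered_set_partitions n k. T a I k M)))"
  proof (rule sum.cong[OF refl])
    fix k
    have "Y k - (2*real g - 2 + real k) * X k
        = (\<Sum>I\<in>ordered_set_partitions n k. JJ a I k (Suc M) - (2*real g - 2 + real k) * (T a I k (Suc M) + 3 * T a I k M))"
      unfolding X_def Y_def by (simp add: sum_subtractf sum_distrib_left)
    also have "\<dots> = (\<Sum>I\<in>ordered_set_partitions n k. (2*real n - 2) * T a I k M)"
      by (intro sum.cong refl per_I[OF _ g sa M_def])
    finally show "KK g k * (Y k - (2*real g - 2 + real k) * X k) = KK g k * ((2*real n - 2) * (\<Sum>I\<in>ordered_set_partitions n k. T a I k M))"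
      by (simp add: sum_distrib_left)
  qed
  also have "\<dots> = (2 * real n - 2) * P g n a"
    unfolding P_eq M_def by (simp add: sum_distrib_left algebra_simps)
  finally show ?thesis .
qed

theorem corollary5p6:
  fixes g n :: nat and a :: "nat \<Rightarrow> nat"
  assumes "g \<ge> 2" and "n \<ge> 1"
    and "(\<Sum>i=1..n. a i) = 2*g-3+n"
  shows "P g (n+1) (a(n+1 := 1)) = (2 * real n - 2) * P g n a
         \<and> P g 2 ((\<lambda>_. 0)(1 := 2*g-2, 2 := 1)) = 0
         \<and> (n \<ge> 2 \<longrightarrow> P g n a = 0 \<longrightarrow> P g (n+1) (a(n+1 := 1)) = 0)"
proof -
  have 1: "P g (n+1) (a(n+1 := 1)) = (2 * real n - 2) * P g n a"
    using main[OF assms] by simp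
  have "sum ((\<lambda>_. 0)(1 := 2*g-2) :: nat \<Rightarrow> nat) {1..1} = 2*g-3+1" using assms(1) by simp
  from main[OF assms(1) _ this] have "P g (Suc 1) (((\<lambda>_. 0)(1 := 2*g-2))(Suc 1 := 1)) = (2 * real 1 - 2) * P g 1 ((\<lambda>_. 0)(1 := 2*g-2))"
    by simp
  then have 2: "P g 2 ((\<lambda>_. 0)(1 := 2*g-2, 2 := 1)) = 0" by (simp add: numeral_2_eq_2)
  show ?thesis using 1 2 by simp
qed


end
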